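(* Let $X$ be a Banach space, $\Omega\in L(X)$ an isomorphism of $X$ onto itself, $\tau>0$, $\varphi\in C^{2}([-2\tau,0],X)$ and $f\in C^{0}([0,\infty),X)$. Then the unique classical solution of $$\ddot x(t)-\Omega^{2}x(t-2\tau)=f(t)\ (t\ge0),\qquad x(t)=\varphi(t)\ (t\in[-2\tau,0])$$ is, for $t\in[-2\tau,\infty)$, $$x(t)=x_1(t+\tau;\Omega)\varphi(-2\tau)+x_2(t+2\tau;\Omega)\dot\varphi(-2\tau)+\int_{-2\tau}^{0}x_2(t-s;\Omega)\ddot\varphi(s)\,ds+\begin{cases}0,& t\in[-2\tau,0),\\ \int_0^t x_2(t-s;\Omega)f(s)\,ds,& t\ge0.\end{cases}$$
   Context: For $A\in L(X)$, $\exp_\tau(t;A)=0$ for $t<-\tau$, $=\mathrm{id}_X$ for $-\tau\le t<0$, and $=\sum_{j=0}^{k}A^{j}\frac{(t-(j-1)\tau)^{j}}{j!}$ for $(k-1)\tau\le t<k\tau$, $k\in\mathbb N$. For $t\in\mathbb R$, $x_1(t;\Omega):=\tfrac12(\exp_\tau(t;\Omega)+\exp_\tau(t;-\Omega))$ and $x_2(t;\Omega):=\tfrac12\Omega^{-1}(\exp_\tau(t;\Omega)-\exp_\tau(t;-\Omega))$; in particular $x_2(t;\Omega)=0$ for $t<0$. A classical solution is a function $x\in C^{1}([-2\tau,\infty),X)\cap C^{2}([-2\tau,0],X)\cap C^{2}([0,\infty),X)$ (one-sided derivatives at endpoints) satisfying the equations pointwise. *)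

theory Defs
  imports "HOL-Analysis.Analysis"
begin

primrec blpow :: "('a::real_normed_vector \<Rightarrow>\<^sub>L 'a) \<Rightarrow> nat \<Rightarrow> ('a \<Rightarrow>\<^sub>L 'a)" where
  "blpow A 0 = id_blinfun"
| "blpow A (Suc n) = A o\<^sub>L blpow A n"

definition is_iso :: "('a::real_normed_vector \<Rightarrow>\<^sub>L 'a) \<Rightarrow> bool" where
  "is_iso A \<longleftrightarrow> (\<exists>B. A o\<^sub>L B = id_blinfun \<and> B o\<^sub>L A = id_blinfun)"

definition blinv :: "('a::real_normed_vector \<Rightarrow>\<^sub>L 'a) \<Rightarrow> ('a \<Rightarrow>\<^sub>L 'a)" where
  "blinv A = (SOME B. A o\<^sub>L B = id_blinfun \<and> B o\<^sub>L A = id_blinfun)"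

(* delayed exponential exp_tau(t;A); for t \<ge> 0 the index k \<in> \<nat> with (k-1)\<tau> \<le> t < k\<tau>
   is k = \<lfloor>t/\<tau>\<rfloor> + 1 *)
definition exp_tau :: "real \<Rightarrow> ('a::real_normed_vector \<Rightarrow>\<^sub>L 'a) \<Rightarrow> real \<Rightarrow> ('a \<Rightarrow>\<^sub>L 'a)" where
  "exp_tau \<tau> A t =
     (if t < - \<tau> then 0
      else if t < 0 then id_blinfun
      else (let k = nat \<lfloor>t / \<tau>\<rfloor> + 1 in
            \<Sum>j\<in>{0..k}. ((t - (real j - 1) * \<tau>) ^ j / fact j) *\<^sub>R blpow A j))"

definition x1 :: "real \<Rightarrow> ('a::real_normed_vector \<Rightarrow>\<^sub>L 'a) \<Rightarrow> real \<Rightarrow> ('a \<Rightarrow>\<^sub>L 'a)" where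
  "x1 \<tau> \<Omega> t = (1/2) *\<^sub>R (exp_tau \<tau> \<Omega> t + exp_tau \<tau> (- \<Omega>) t)"

definition x2 :: "real \<Rightarrow> ('a::real_normed_vector \<Rightarrow>\<^sub>L 'a) \<Rightarrow> real \<Rightarrow> ('a \<Rightarrow>\<^sub>L 'a)" where
  "x2 \<tau> \<Omega> t = (1/2) *\<^sub>R (blinv \<Omega> o\<^sub>L (exp_tau \<tau> \<Omega> t - exp_tau \<tau> (- \<Omega>) t))"

(* classical solution of  x''(t) - \<Omega>^2 x(t-2\<tau>) = f(t) (t \<ge> 0),  x = \<phi> on [-2\<tau>,0]:
   x \<in> C^1([-2\<tau>,\<infinity>)) \<inter> C^2([-2\<tau>,0]) \<inter> C^2([0,\<infinity>)), one-sided derivatives at endpoints *)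
definition classical_solution ::
  "real \<Rightarrow> ('a::real_normed_vector \<Rightarrow>\<^sub>L 'a) \<Rightarrow> (real \<Rightarrow> 'a) \<Rightarrow> (real \<Rightarrow> 'a) \<Rightarrow> (real \<Rightarrow> 'a) \<Rightarrow> bool" where
  "classical_solution \<tau> \<Omega> \<phi> f x \<longleftrightarrow>
     (\<exists>x' xl xr.
        (\<forall>t\<in>{-2*\<tau>..}. (x has_vector_derivative x' t) (at t within {-2*\<tau>..})) \<and>
        continuous_on {-2*\<tau>..} x' \<and>
        (\<forall>t\<in>{-2*\<tau>..0}. (x' has_vector_derivative xl t) (at t within {-2*\<tau>..0})) \<and>
        continuous_on {-2*\<tau>..0} xl \<and>
        (\<forall>t\<in>{0..}. (x' has_vector_derivative xr t) (at t within {0..})) \<and>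
        continuous_on {0..} xr \<and>
        (\<forall>t\<in>{0..}. xr t - \<Omega> (\<Omega> (x (t - 2*\<tau>))) = f t) \<and>
        (\<forall>t\<in>{-2*\<tau>..0}. x t = \<phi> t))"

end

theory Submission
  imports Defs
begin

definition tp :: "nat \<Rightarrow> real \<Rightarrow> real" where
  "tp j u = (max 0 u) ^ j / fact j"

lemma deriv_trivial:
  assumes "\<not> x islimpt S"
  shows "(f has_vector_derivative D) (at x within S)"
proof -
  have "at x within S = bot" using assms trivial_limit_within by blast
  then show ?thesis
    by (simp add: has_vector_derivative_def has_derivative_def bounded_linear_scaleR_left)
qed

lemma deriv_Un:
  assumes "(f has_vector_derivative D) (at x within S)"
    and "(f has_vector_derivative D) (at x within T)"
  shows "(f has_vector_derivative D) (at x within (S \<union> T))"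
  using assms unfolding has_vector_derivative_def has_derivative_within
  by (auto simp: Lim_within_Un)

lemma deriv_split:
  fixes c :: real
  assumes "(f has_vector_derivative D) (at x within {..c})"
    and "(f has_vector_derivative D) (at x within {c..})"
  shows "(f has_vector_derivative D) (at x)"
proof -
  have "{..c} \<union> {c..} = (UNIV::real set)" by auto
  with deriv_Un[OF assms] show ?thesis by simp
qed

lemma tp0[simp]: "tp 0 u = 1" by (simp add: tp_def)
lemma tp_neg: "u \<le> 0 \<Longrightarrow> j \<ge> 1 \<Longrightarrow> tp j u = 0" by (simp add: tp_def max_def)
lemma tp_pos: "u \<ge> 0 \<Longrightarrow> tp j u = u ^ j / fact j" by (simp add: tp_def max_def)

lemma tp_deriv_pos:
  assumes "j \<ge> 1" "u \<ge> 0"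
  shows "((tp j) has_real_derivative tp (j - 1) u) (at u within {0..})"
proof -
  have d: "((\<lambda>u. u ^ j / fact j) has_real_derivative (real j * u ^ (j - 1)) / fact j) (at u within {0..})"
    by (auto intro!: derivative_eq_intros)
  have e: "(real j * u ^ (j - 1)) / fact j = tp (j - 1) u"
    using assms by (cases j) (auto simp: tp_pos)
  show ?thesis
    using d unfolding e
    by (rule has_field_derivative_transform_within[where d=1]) (auto simp: tp_pos assms)
qed

lemma tp_deriv:
  assumes "j \<ge> 2"
  shows "((tp j) has_real_derivative tp (j - 1) u) (at u)"
proof -
  have a: "(tp j has_vector_derivative tp (j - 1) u) (at u within {0..})"
  proof (cases "u \<ge> 0")
    case True then show ?thesis using tp_deriv_pos[of j u] assms
      by (simp add: has_real_derivative_iff_has_vector_derivative)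
  next
    case False then show ?thesis by (intro deriv_trivial) (auto simp: islimpt_in_closure)
  qed
  have b: "(tp j has_vector_derivative tp (j - 1) u) (at u within {..0})"
  proof (cases "u \<le> 0")
    case True
    have "((\<lambda>_. 0::real) has_vector_derivative 0) (at u within {..0})" by (rule has_vector_derivative_const)
    then show ?thesis
      using True assms
      by (rule_tac has_vector_derivative_transform[where f="\<lambda>_. 0"]) (auto simp: tp_neg)
  next
    case False then show ?thesis by (intro deriv_trivial) (auto simp: islimpt_in_closure)
  qed
  show ?thesis using deriv_split[OF b a] by (simp add: has_real_derivative_iff_has_vector_derivative)
qed


definition Ssum :: "real \<Rightarrow> ('a::real_normed_vector \<Rightarrow>\<^sub>L 'a) \<Rightarrow> nat \<Rightarrow> real \<Rightarrow> ('a \<Rightarrow>\<^sub>L 'a)" where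
  "Ssum \<tau> A N w = (\<Sum>j\<in>{0..N}. tp j (w - (real j - 1) * \<tau>) *\<^sub>R blpow A j)"

lemma exp_repr:
  assumes tau: "\<tau> > 0" and w1: "- \<tau> \<le> w" and w2: "w < real N * \<tau>"
  shows "exp_tau \<tau> A w = Ssum \<tau> A N w"
proof (cases "w < 0")
  case True
  have "Ssum \<tau> A N w = (\<Sum>j\<in>{0}. tp j (w - (real j - 1) * \<tau>) *\<^sub>R blpow A j)"
    unfolding Ssum_def
  proof (rule sum.mono_neutral_right)
    show "\<forall>i\<in>{0..N} - {0}. tp i (w - (real i - 1) * \<tau>) *\<^sub>R blpow A i = 0"
    proof
      fix i assume i: "i \<in> {0..N} - {0}"
      then have "real i - 1 \<ge> 0" by auto
      then have "(real i - 1) * \<tau> \<ge> 0" using tau by simp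
      then show "tp i (w - (real i - 1) * \<tau>) *\<^sub>R blpow A i = 0"
        using True i by (subst tp_neg) auto
    qed
  qed auto
  then show ?thesis using True w1 by (simp add: exp_tau_def)
next
  case False
  define k where "k = nat \<lfloor>w / \<tau>\<rfloor> + 1"
  have fl0: "\<lfloor>w / \<tau>\<rfloor> \<ge> 0" using False tau by simp
  have flw: "real_of_int \<lfloor>w / \<tau>\<rfloor> * \<tau> \<le> w"
    using tau by (metis floor_divide_lower)
  have wfl: "w < (real_of_int \<lfloor>w / \<tau>\<rfloor> + 1) * \<tau>"
    using tau by (metis floor_divide_upper)
  have kreal: "real k = real_of_int \<lfloor>w / \<tau>\<rfloor> + 1" using fl0 k_def by simp
  have kN: "k \<le> N"
  proof -
    have "real k * \<tau> \<le> w + \<tau>" using kreal flw by (simp add: algebra_simps)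
    have "(real_of_int \<lfloor>w / \<tau>\<rfloor>) * \<tau> < real N * \<tau>" using flw w2 by linarith
    then have "real_of_int \<lfloor>w / \<tau>\<rfloor> < real N" using tau by simp
    then show ?thesis using kreal by linarith
  qed
  have e: "exp_tau \<tau> A w = (\<Sum>j\<in>{0..k}. ((w - (real j - 1) * \<tau>) ^ j / fact j) *\<^sub>R blpow A j)"
    using False tau w1 by (simp add: exp_tau_def k_def Let_def)
  also have "\<dots> = (\<Sum>j\<in>{0..k}. tp j (w - (real j - 1) * \<tau>) *\<^sub>R blpow A j)"
  proof (rule sum.cong[OF refl])
    fix j assume j: "j \<in> {0..k}"
    then have "real j - 1 \<le> real_of_int \<lfloor>w / \<tau>\<rfloor>" using kreal by auto
    then have "(real j - 1) * \<tau> \<le> real_of_int \<lfloor>w / \<tau>\<rfloor> * \<tau>" using tau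
      by (simp add: mult_right_mono)
    then have "w - (real j - 1) * \<tau> \<ge> 0" using flw by linarith
    then show "((w - (real j - 1) * \<tau>) ^ j / fact j) *\<^sub>R blpow A j = tp j (w - (real j - 1) * \<tau>) *\<^sub>R blpow A j"
      by (simp add: tp_pos)
  qed
  also have "\<dots> = Ssum \<tau> A N w"
    unfolding Ssum_def
  proof (rule sum.mono_neutral_left)
    show "\<forall>i\<in>{0..N} - {0..k}. tp i (w - (real i - 1) * \<tau>) *\<^sub>R blpow A i = 0"
    proof
      fix i assume i: "i \<in> {0..N} - {0..k}"
      then have "real i - 1 \<ge> real k" by auto
      then have "(real i - 1) * \<tau> \<ge> real k * \<tau>" using tau by (simp add: mult_right_mono)
      then have "w - (real i - 1) * \<tau> \<le> 0" using wfl kreal by (simp add: algebra_simps) 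
      then show "tp i (w - (real i - 1) * \<tau>) *\<^sub>R blpow A i = 0"
        using i by (subst tp_neg) auto
    qed
  qed (use kN in auto)
  finally show ?thesis .
qed


lemma tp_shift_deriv:
  assumes "j \<ge> 1" "w \<ge> 0" "j \<ge> 2 \<or> c = 0"
  shows "((\<lambda>w. tp j (w - c)) has_real_derivative tp (j - 1) (w - c)) (at w within {0..})"
proof (cases "j \<ge> 2")
  case True
  have "((\<lambda>w. tp j (w - c)) has_real_derivative tp (j - 1) (w - c) * 1) (at w)"
    by (rule DERIV_chain2[OF tp_deriv[OF True]]) (auto intro!: derivative_eq_intros)
  then show ?thesis by (simp add: has_field_derivative_at_within)
next
  case False
  then have j: "j = 1" and c: "c = 0" using assms by auto
  show ?thesis using tp_deriv_pos[of 1 w] j c assms by simp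
qed

lemma Ssum_split:
  "Ssum \<tau> A (Suc N) w = id_blinfun + (\<Sum>j\<in>{0..N}. tp (Suc j) (w - real j * \<tau>) *\<^sub>R blpow A (Suc j))"
  unfolding Ssum_def by (subst sum.atLeast0_atMost_Suc_shift) simp

lemma Ssum_deriv:
  assumes tau: "\<tau> > 0" and w: "w \<ge> 0"
  shows "((Ssum \<tau> A (Suc N)) has_vector_derivative (A o\<^sub>L Ssum \<tau> A N (w - \<tau>))) (at w within {0..})"
proof -
  have d: "((\<lambda>w. id_blinfun + (\<Sum>j\<in>{0..N}. tp (Suc j) (w - real j * \<tau>) *\<^sub>R blpow A (Suc j)))
     has_vector_derivative (0 + (\<Sum>j\<in>{0..N}. tp j (w - real j * \<tau>) *\<^sub>R blpow A (Suc j)))) (at w within {0..})"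
  proof (intro has_vector_derivative_add has_vector_derivative_const has_vector_derivative_sum)
    fix j assume "j \<in> {0..N}"
    have "((\<lambda>w. tp (Suc j) (w - real j * \<tau>)) has_real_derivative tp (Suc j - 1) (w - real j * \<tau>)) (at w within {0..})"
      by (rule tp_shift_deriv) (use tau w in auto)
    then show "((\<lambda>w. tp (Suc j) (w - real j * \<tau>) *\<^sub>R blpow A (Suc j)) has_vector_derivative
            tp j (w - real j * \<tau>) *\<^sub>R blpow A (Suc j)) (at w within {0..})"
      using has_vector_derivative_scaleR[OF _ has_vector_derivative_const] by fastforce
  qed
  have e: "(\<Sum>j\<in>{0..N}. tp j (w - real j * \<tau>) *\<^sub>R blpow A (Suc j)) = A o\<^sub>L Ssum \<tau> A N (w - \<tau>)"
    unfolding Ssum_def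
    by (simp add: bounded_bilinear.sum_right[OF bounded_bilinear_blinfun_compose]
        bounded_bilinear.scaleR_right[OF bounded_bilinear_blinfun_compose] algebra_simps)
  show ?thesis using d unfolding e by (simp add: Ssum_split[abs_def])
qed

lemma exp_deriv:
  assumes tau: "\<tau> > 0" and w: "w \<ge> 0"
  shows "((exp_tau \<tau> A) has_vector_derivative (A o\<^sub>L exp_tau \<tau> A (w - \<tau>))) (at w within {0..})"
proof -
  obtain N :: nat where N: "real N > (w + 1) / \<tau> + 1" using reals_Archimedean2 by blast
  then have N1: "real N * \<tau> > w + 1 + \<tau>" using tau by (simp add: field_simps)
  have "(w + 1) / \<tau> \<ge> 0" using w tau by simp
  then have "N > 0" using N by linarith
  then obtain M where M: "N = Suc M" using gr0_implies_Suc by blast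
  have d: "((Ssum \<tau> A (Suc M)) has_vector_derivative (A o\<^sub>L Ssum \<tau> A M (w - \<tau>))) (at w within {0..})"
    by (rule Ssum_deriv[OF tau w])
  have e: "Ssum \<tau> A M (w - \<tau>) = exp_tau \<tau> A (w - \<tau>)"
    using N1 M w tau by (subst exp_repr) (auto simp: algebra_simps)
  show ?thesis
    using d unfolding e
    by (rule has_vector_derivative_transform_within[where d=1])
       (use N1 M w tau in \<open>auto simp: dist_real_def intro!: exp_repr[symmetric]\<close>)
qed


lemma iso_inv:
  assumes "is_iso A"
  shows "A o\<^sub>L blinv A = id_blinfun" "blinv A o\<^sub>L A = id_blinfun"
proof -
  have "A o\<^sub>L blinv A = id_blinfun \<and> blinv A o\<^sub>L A = id_blinfun"
    using assms unfolding is_iso_def blinv_def by (rule someI_ex)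
  then show "A o\<^sub>L blinv A = id_blinfun" "blinv A o\<^sub>L A = id_blinfun" by auto
qed

lemma iso_inv_apply:
  assumes "is_iso A"
  shows "A (blinv A v) = v" "blinv A (A v) = v"
  using iso_inv[OF assms] by (metis blinfun_apply_blinfun_compose blinfun_apply_id_blinfun id_apply)+

lemma exp_lt: "w < - \<tau> \<Longrightarrow> exp_tau \<tau> A w = 0" by (simp add: exp_tau_def)
lemma exp_mid: "- \<tau> \<le> w \<Longrightarrow> w < 0 \<Longrightarrow> exp_tau \<tau> A w = id_blinfun" by (simp add: exp_tau_def)

lemma comp_id_r[simp]: "A o\<^sub>L id_blinfun = A"
  by (rule blinfun_eqI) simp

lemma blpow1: "blpow A 1 = A"
  by (rule blinfun_eqI) simp

lemmas bl_simps = blinfun.diff_right blinfun.add_right blinfun.scaleR_right blinfun.minus_right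
  blinfun.diff_left blinfun.add_left blinfun.scaleR_left blinfun.minus_left

lemma exp_small:
  assumes tau: "\<tau> > 0" and w: "0 \<le> w" "w \<le> \<tau>"
  shows "exp_tau \<tau> A w = id_blinfun + w *\<^sub>R A"
proof -
  have "exp_tau \<tau> A w = Ssum \<tau> A 2 w" using tau w by (intro exp_repr) auto
  also have "\<dots> = id_blinfun + w *\<^sub>R A"
    using w by (simp add: Ssum_def numeral_2_eq_2 tp_pos tp_neg blpow1)
  finally show ?thesis .
qed

lemma x2_neg: "w < 0 \<Longrightarrow> x2 \<tau> \<Omega> w = 0"
  unfolding x2_def exp_tau_def by simp

lemma x2_zero: "\<tau> > 0 \<Longrightarrow> x2 \<tau> \<Omega> 0 = 0"
proof -
  assume t: "\<tau> > 0"
  have e1: "exp_tau \<tau> \<Omega> 0 = id_blinfun" using exp_small[OF t, of 0] t by simp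
  have e2: "exp_tau \<tau> (- \<Omega>) 0 = id_blinfun" using exp_small[OF t, of 0] t by simp
  show ?thesis unfolding x2_def e1 e2 by simp
qed

lemma x2_nonpos: "\<tau> > 0 \<Longrightarrow> w \<le> 0 \<Longrightarrow> x2 \<tau> \<Omega> w = 0"
  by (metis x2_neg x2_zero less_eq_real_def)

lemma x1_id:
  assumes tau: "\<tau> > 0" and w: "- \<tau> \<le> w" "w \<le> \<tau>"
  shows "x1 \<tau> \<Omega> w = id_blinfun"
proof (cases "w < 0")
  case True then show ?thesis using w by (simp add: x1_def exp_mid scaleR_2[symmetric] del: scaleR_2)
next
  case False
  then show ?thesis using w tau
    by (simp add: x1_def exp_small)
qed

lemma x1_lt: "w < - \<tau> \<Longrightarrow> x1 \<tau> \<Omega> w = 0"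
  unfolding x1_def exp_tau_def by simp

lemma shift_deriv:
  assumes "(F has_vector_derivative D) (at (w + c) within S)"
    and "(\<lambda>y. y + c) ` T \<subseteq> S"
  shows "((\<lambda>w. F (w + c)) has_vector_derivative D) (at w within T)"
proof -
  have a: "((\<lambda>y. y + c) has_vector_derivative 1) (at w within T)"
    by (auto intro!: derivative_eq_intros)
  have b: "(F has_vector_derivative D) (at ((\<lambda>y. y + c) w) within (\<lambda>y. y + c) ` T)"
    using assms has_vector_derivative_within_subset by fastforce
  show ?thesis using vector_diff_chain_within[OF a b] by (simp add: o_def)
qed

lemma x2_deriv:
  assumes iso: "is_iso \<Omega>" and tau: "\<tau> > 0" and w: "w \<ge> 0"
  shows "(x2 \<tau> \<Omega> has_vector_derivative x1 \<tau> \<Omega> (w - \<tau>)) (at w within {0..})"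
proof -
  have d: "((\<lambda>w. exp_tau \<tau> \<Omega> w - exp_tau \<tau> (- \<Omega>) w) has_vector_derivative
     ((\<Omega> o\<^sub>L exp_tau \<tau> \<Omega> (w - \<tau>)) - ((- \<Omega>) o\<^sub>L exp_tau \<tau> (- \<Omega>) (w - \<tau>)))) (at w within {0..})"
    by (rule has_vector_derivative_diff[OF exp_deriv[OF tau w] exp_deriv[OF tau w]])
  have bl: "bounded_linear (\<lambda>X. (1/2) *\<^sub>R (blinv \<Omega> o\<^sub>L X))"
    by (rule bounded_linear_compose[OF bounded_linear_scaleR_right
          bounded_bilinear.bounded_linear_right[OF bounded_bilinear_blinfun_compose]])
  have d2: "(x2 \<tau> \<Omega> has_vector_derivative
      (1/2) *\<^sub>R (blinv \<Omega> o\<^sub>L ((\<Omega> o\<^sub>L exp_tau \<tau> \<Omega> (w - \<tau>)) - ((- \<Omega>) o\<^sub>L exp_tau \<tau> (- \<Omega>) (w - \<tau>)))))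
      (at w within {0..})"
    using bounded_linear.has_vector_derivative[OF bl d] unfolding x2_def[abs_def] by simp
  have e: "(1/2) *\<^sub>R (blinv \<Omega> o\<^sub>L ((\<Omega> o\<^sub>L exp_tau \<tau> \<Omega> (w - \<tau>)) - ((- \<Omega>) o\<^sub>L exp_tau \<tau> (- \<Omega>) (w - \<tau>))))
     = x1 \<tau> \<Omega> (w - \<tau>)"
    by (rule blinfun_eqI) (simp add: x1_def bl_simps iso_inv_apply[OF iso])
  show ?thesis using d2 unfolding e .
qed

lemma x1_deriv:
  assumes iso: "is_iso \<Omega>" and tau: "\<tau> > 0" and w: "w \<ge> 0"
  shows "(x1 \<tau> \<Omega> has_vector_derivative \<Omega> o\<^sub>L \<Omega> o\<^sub>L x2 \<tau> \<Omega> (w - \<tau>)) (at w within {0..})"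
proof -
  have d: "((\<lambda>w. exp_tau \<tau> \<Omega> w + exp_tau \<tau> (- \<Omega>) w) has_vector_derivative
     ((\<Omega> o\<^sub>L exp_tau \<tau> \<Omega> (w - \<tau>)) + ((- \<Omega>) o\<^sub>L exp_tau \<tau> (- \<Omega>) (w - \<tau>)))) (at w within {0..})"
    by (rule has_vector_derivative_add[OF exp_deriv[OF tau w] exp_deriv[OF tau w]])
  have d2: "(x1 \<tau> \<Omega> has_vector_derivative
      (1/2) *\<^sub>R ((\<Omega> o\<^sub>L exp_tau \<tau> \<Omega> (w - \<tau>)) + ((- \<Omega>) o\<^sub>L exp_tau \<tau> (- \<Omega>) (w - \<tau>))))
      (at w within {0..})"
    using bounded_linear.has_vector_derivative[OF bounded_linear_scaleR_right[of "1/2"] d] unfolding x1_def[abs_def] by simp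
  have e: "(1/2) *\<^sub>R ((\<Omega> o\<^sub>L exp_tau \<tau> \<Omega> (w - \<tau>)) + ((- \<Omega>) o\<^sub>L exp_tau \<tau> (- \<Omega>) (w - \<tau>)))
     = \<Omega> o\<^sub>L \<Omega> o\<^sub>L x2 \<tau> \<Omega> (w - \<tau>)"
    by (rule blinfun_eqI) (simp add: x2_def bl_simps iso_inv_apply[OF iso])
  show ?thesis using d2 unfolding e .
qed

lemma K2_deriv:
  assumes iso: "is_iso \<Omega>" and tau: "\<tau> > 0" and w: "w \<ge> 0"
  shows "((\<lambda>w. x1 \<tau> \<Omega> (w - \<tau>)) has_vector_derivative \<Omega> o\<^sub>L \<Omega> o\<^sub>L x2 \<tau> \<Omega> (w - 2 * \<tau>))
     (at w within {0..})"
proof -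
  have A: "((\<lambda>w. x1 \<tau> \<Omega> (w - \<tau>)) has_vector_derivative \<Omega> o\<^sub>L \<Omega> o\<^sub>L x2 \<tau> \<Omega> (w - 2 * \<tau>))
     (at w within {\<tau>..})"
  proof (cases "w \<ge> \<tau>")
    case True
    have "(x1 \<tau> \<Omega> has_vector_derivative \<Omega> o\<^sub>L \<Omega> o\<^sub>L x2 \<tau> \<Omega> ((w + - \<tau>) - \<tau>)) (at (w + - \<tau>) within {0..})"
      using x1_deriv[OF iso tau, of "w + - \<tau>"] True by simp
    then have "((\<lambda>w. x1 \<tau> \<Omega> (w + - \<tau>)) has_vector_derivative \<Omega> o\<^sub>L \<Omega> o\<^sub>L x2 \<tau> \<Omega> ((w + - \<tau>) - \<tau>))
     (at w within {\<tau>..})"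
      by (rule shift_deriv) auto
    then show ?thesis by (simp add: algebra_simps)
  next
    case False
    then show ?thesis by (intro deriv_trivial) (auto simp: islimpt_in_closure)
  qed
  have B: "((\<lambda>w. x1 \<tau> \<Omega> (w - \<tau>)) has_vector_derivative \<Omega> o\<^sub>L \<Omega> o\<^sub>L x2 \<tau> \<Omega> (w - 2 * \<tau>))
     (at w within {0..\<tau>})"
  proof (cases "w \<le> \<tau>")
    case True
    have z: "\<Omega> o\<^sub>L \<Omega> o\<^sub>L x2 \<tau> \<Omega> (w - 2 * \<tau>) = 0"
      using True tau by (simp add: x2_neg)
    have "((\<lambda>_. id_blinfun) has_vector_derivative 0) (at w within {0..\<tau>})" by simp
    then show ?thesis unfolding z
      by (rule has_vector_derivative_transform[rotated 2]) (use True w tau in \<open>auto intro!: x1_id\<close>)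
  next
    case False
    then show ?thesis by (intro deriv_trivial) (auto simp: islimpt_in_closure)
  qed
  have "{0..\<tau>} \<union> {\<tau>..} = {0..}" using tau by auto
  then show ?thesis using deriv_Un[OF B A] by simp
qed

lemma x2_cont:
  assumes iso: "is_iso \<Omega>" and tau: "\<tau> > 0"
  shows "continuous_on UNIV (x2 \<tau> \<Omega>)"
proof -
  have c1: "continuous_on {0..} (x2 \<tau> \<Omega>)"
    unfolding continuous_on_eq_continuous_within
    using x2_deriv[OF iso tau] has_vector_derivative_continuous by blast
  have c2: "continuous_on {..0} (x2 \<tau> \<Omega>)"
    by (rule continuous_on_eq[OF continuous_on_const[of _ 0]]) (use tau x2_nonpos in auto)
  have "continuous_on ({..0} \<union> {0..}) (x2 \<tau> \<Omega>)"
    by (rule continuous_on_closed_Un[OF _ _ c2 c1]) auto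
  moreover have "{..0} \<union> {0..} = (UNIV :: real set)" by auto
  ultimately show ?thesis by simp
qed

lemma K2_cont:
  assumes iso: "is_iso \<Omega>" and tau: "\<tau> > 0"
  shows "continuous_on {0..} (\<lambda>w. x1 \<tau> \<Omega> (w - \<tau>))"
  unfolding continuous_on_eq_continuous_within
  using K2_deriv[OF iso tau] has_vector_derivative_continuous by blast


lemma int_bound:
  fixes h :: "real \<Rightarrow> 'a::banach"
  assumes "continuous_on {p..q} h" "p \<le> q" "\<And>s. s \<in> {p..q} \<Longrightarrow> norm (h s) \<le> B" "0 \<le> B"
  shows "norm (integral {p..q} h) \<le> B * (q - p)"
proof -
  have "(h has_integral integral {p..q} h) {p..q}"
    using assms(1) by (intro integrable_integral integrable_continuous_interval)
  moreover have "\<And>x. x \<in> {p..q} - {} \<Longrightarrow> norm (h x) \<le> B" using assms(3) by auto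
  ultimately have "norm (integral {p..q} h) \<le> B * Henstock_Kurzweil_Integration.content {p..q}"
    by (rule has_integral_bound_real[OF assms(4) finite.emptyI])
  then show ?thesis using assms(2) by simp
qed

lemma ext_kernel:
  fixes K K' :: "real \<Rightarrow> 'b::banach"
  assumes d: "\<And>w. w \<ge> 0 \<Longrightarrow> (K has_vector_derivative K' w) (at w within {0..})"
    and c: "continuous_on {0..} K'"
  shows "((\<lambda>w. if 0 \<le> w then K w else K 0 + w *\<^sub>R K' 0) has_vector_derivative K' (max 0 w)) (at w)"
    and "continuous_on UNIV (\<lambda>w. K' (max 0 w))"
proof -
  let ?Kt = "\<lambda>w. if 0 \<le> w then K w else K 0 + w *\<^sub>R K' 0"
  have a: "(?Kt has_vector_derivative K' (max 0 w)) (at w within {0..})"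
  proof (cases "w \<ge> 0")
    case True
    then show ?thesis using d[OF True]
      by (rule_tac has_vector_derivative_transform[where f=K]) auto
  next
    case False
    then show ?thesis by (intro deriv_trivial) (auto simp: islimpt_in_closure)
  qed
  have b: "(?Kt has_vector_derivative K' (max 0 w)) (at w within {..0})"
  proof (cases "w \<le> 0")
    case True
    have "((\<lambda>w. K 0 + w *\<^sub>R K' 0) has_vector_derivative (0 + (w *\<^sub>R 0 + 1 *\<^sub>R K' 0))) (at w within {..0})"
      by (intro has_vector_derivative_add has_vector_derivative_const has_vector_derivative_scaleR DERIV_ident)
    moreover have "max 0 w = 0" using True by simp
    ultimately have dd: "((\<lambda>w. K 0 + w *\<^sub>R K' 0) has_vector_derivative K' (max 0 w)) (at w within {..0})"
      by simp
    have eq: "\<And>x. x \<in> {..0} \<Longrightarrow> ?Kt x = K 0 + x *\<^sub>R K' 0" by auto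
    show ?thesis by (rule has_vector_derivative_transform[OF _ eq dd]) (use True in simp)
  next
    case False
    then show ?thesis by (intro deriv_trivial) (auto simp: islimpt_in_closure)
  qed
  show "(?Kt has_vector_derivative K' (max 0 w)) (at w)" by (rule deriv_split[OF b a])
  show "continuous_on UNIV (\<lambda>w. K' (max 0 w))"
    by (rule continuous_on_compose2[OF c]) (auto intro!: continuous_intros)
qed

lemma leib:
  fixes Kt Kd :: "real \<Rightarrow> 'a::banach \<Rightarrow>\<^sub>L 'a" and g :: "real \<Rightarrow> 'a"
  assumes d: "\<And>w. (Kt has_vector_derivative Kd w) (at w)" and c: "continuous_on UNIV Kd"
    and gc: "continuous_on {a..b} g"
  shows "((\<lambda>t. integral {a..b} (\<lambda>s. Kt (t - s) (g s))) has_vector_derivative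
           integral {a..b} (\<lambda>s. Kd (t0 - s) (g s))) (at t0)"
proof -
  have Kc: "continuous_on UNIV Kt"
    unfolding continuous_on_eq_continuous_within
    using d has_vector_derivative_continuous has_vector_derivative_at_within by blast
  have "((\<lambda>t. integral (cbox a b) (\<lambda>s. Kt (t - s) (g s))) has_vector_derivative
           integral (cbox a b) (\<lambda>s. Kd (t0 - s) (g s))) (at t0 within UNIV)"
  proof (rule leibniz_rule_vector_derivative)
    fix x t
    have "(Kt has_vector_derivative Kd (x + - t)) (at (x + - t) within UNIV)" using d by simp
    then have "((\<lambda>x. Kt (x + - t)) has_vector_derivative Kd (x + - t)) (at x within UNIV)"
      by (rule shift_deriv) auto
    then have "((\<lambda>x. Kt (x - t)) has_vector_derivative Kd (x - t)) (at x within UNIV)" by simp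
    then show "((\<lambda>x. Kt (x - t) (g t)) has_vector_derivative Kd (x - t) (g t)) (at x within UNIV)"
      by (rule bounded_linear.has_vector_derivative[OF blinfun.bounded_linear_left])
  next
    fix x :: real
    have "continuous_on (cbox a b) (\<lambda>s. Kt (x - s) (g s))"
      using gc by (auto intro!: blinfun.continuous_on continuous_on_compose2[OF Kc] continuous_intros)
    then show "(\<lambda>s. Kt (x - s) (g s)) integrable_on cbox a b" by (rule integrable_continuous)
  next
    have "continuous_on (UNIV \<times> cbox a b) (\<lambda>p. Kd (fst p - snd p) (g (snd p)))"
      by (auto intro!: blinfun.continuous_on continuous_on_compose2[OF c] continuous_intros
           continuous_on_compose2[OF gc])
    then show "continuous_on (UNIV \<times> cbox a b) (\<lambda>(x, t). Kd (x - t) (g t))"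
      by (simp add: case_prod_beta')
  qed auto
  then show ?thesis by simp
qed


lemma conv_deriv:
  fixes K Kd :: "real \<Rightarrow> 'a::banach \<Rightarrow>\<^sub>L 'a" and g :: "real \<Rightarrow> 'a"
  assumes d: "\<And>w. (K has_vector_derivative Kd w) (at w)" and c: "continuous_on UNIV Kd"
    and gc: "continuous_on {a..} g" and t0: "a \<le> t0"
  shows "((\<lambda>t. integral {a..t} (\<lambda>s. K (t - s) (g s))) has_vector_derivative
        (K 0 (g t0) + integral {a..t0} (\<lambda>s. Kd (t0 - s) (g s)))) (at t0 within {a..})"
proof -
  define b where "b = t0 + 1"
  have Kc: "continuous_on UNIV K"
    unfolding continuous_on_eq_continuous_within
    using d has_vector_derivative_continuous has_vector_derivative_at_within by blast
  have gcs: "continuous_on {p..q} g" if "a \<le> p" for p q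
    by (rule continuous_on_subset[OF gc]) (use that in auto)
  have hc: "continuous_on {p..q} (\<lambda>s. K (t - s) (g s))" if "a \<le> p" for t p q
    using gcs[OF that] by (auto intro!: blinfun.continuous_on continuous_on_compose2[OF Kc] continuous_intros)
  have h0c: "continuous_on {p..q} (\<lambda>s. K 0 (g s))" if "a \<le> p" for p q
    using gcs[OF that] by (auto intro!: blinfun.continuous_on continuous_intros)
  define P where "P t = integral {a..t0} (\<lambda>s. K (t - s) (g s))" for t
  define Sf where "Sf t = integral {a..t} (\<lambda>s. K 0 (g s))" for t
  define H where "H t = integral {a..t} (\<lambda>s. K (t - s) (g s))" for t
  define E where "E t = H t - P t - Sf t + Sf t0" for t
  have dP: "(P has_vector_derivative integral {a..t0} (\<lambda>s. Kd (t0 - s) (g s))) (at t0 within {a..})"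
    unfolding P_def[abs_def] by (rule has_vector_derivative_at_within[OF leib[OF d c gcs]]) simp
  have dS: "(Sf has_vector_derivative K 0 (g t0)) (at t0 within {a..})"
  proof -
    have 1: "(Sf has_vector_derivative K 0 (g t0)) (at t0 within {a..b})"
      unfolding Sf_def[abs_def] by (rule integral_has_vector_derivative) (use h0c t0 b_def in auto)
    have 2: "(Sf has_vector_derivative K 0 (g t0)) (at t0 within {b..})"
      by (rule deriv_trivial) (auto simp: islimpt_in_closure b_def)
    have "{a..b} \<union> {b..} = {a..}" using t0 b_def by auto
    then show ?thesis using deriv_Un[OF 1 2] by simp
  qed
  have dE: "(E has_vector_derivative 0) (at t0 within {a..})"
  proof -
    have E0: "E t0 = 0" unfolding E_def H_def P_def by simp
    obtain M where M: "M > 0" "\<And>s. s \<in> {a..b} \<Longrightarrow> norm (g s) \<le> M"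
    proof -
      have "bounded (g ` {a..b})"
        by (intro compact_imp_bounded compact_continuous_image gcs compact_Icc) simp
      then show ?thesis using that unfolding bounded_pos by auto
    qed
    have key: "\<exists>d>0. \<forall>y\<in>{a..}. norm (y - t0) < d \<longrightarrow> norm (E y - E t0 - (y - t0) *\<^sub>R 0) \<le> e * norm (y - t0)"
      if e: "e > 0" for e
    proof -
      have "continuous (at 0) K" using Kc by (simp add: continuous_on_eq_continuous_at)
      moreover have eM: "e / M > 0" using e M by simp
      ultimately obtain d1 where d1: "d1 > 0" "\<And>u. dist u 0 < d1 \<Longrightarrow> dist (K u) (K 0) < e / M"
        unfolding continuous_at_eps_delta by blast
      define d where "d = min d1 1"
      have bnd: "norm (K (y - s) (g s) - K 0 (g s)) \<le> e" if "s \<in> {a..b}" "\<bar>y - s\<bar> < d1" for y s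
      proof -
        have "norm (K (y - s) (g s) - K 0 (g s)) = norm ((K (y - s) - K 0) (g s))" by (simp add: blinfun.diff_left)
        also have "\<dots> \<le> norm (K (y - s) - K 0) * norm (g s)" by (rule norm_blinfun)
        also have "\<dots> \<le> (e / M) * M"
        proof (rule mult_mono)
          show "norm (K (y - s) - K 0) \<le> e / M" using d1(2)[of "y - s"] that by (simp add: dist_norm)
          show "norm (g s) \<le> M" using M(2) that by simp
        qed (use e M in auto)
        also have "\<dots> = e" using M by simp
        finally show ?thesis .
      qed
      have "\<forall>y\<in>{a..}. norm (y - t0) < d \<longrightarrow> norm (E y - E t0 - (y - t0) *\<^sub>R 0) \<le> e * norm (y - t0)"
      proof (intro ballI impI)
        fix y assume y: "y \<in> {a..}" "norm (y - t0) < d"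
        have ya: "a \<le> y" using y by simp
        have ytd: "\<bar>y - t0\<bar> < d1" "\<bar>y - t0\<bar> < 1" using y by (auto simp: d_def)
        define h where "h s = K (y - s) (g s) - K 0 (g s)" for s
        have hcont: "continuous_on {p..q} h" if "a \<le> p" for p q
          unfolding h_def using hc[OF that] h0c[OF that] by (rule continuous_on_diff)
        have int_eq: "integral {a..q} h = integral {a..q} (\<lambda>s. K (y - s) (g s)) - integral {a..q} (\<lambda>s. K 0 (g s))" for q
          unfolding h_def by (rule integral_diff) (use hc h0c in \<open>auto intro!: integrable_continuous_interval\<close>)
        have Ey: "E y = integral {a..y} h - integral {a..t0} h"
          unfolding E_def H_def P_def Sf_def int_eq[of y] int_eq[of t0] by (simp add: algebra_simps)
        have hb: "norm (h s) \<le> e" if "s \<in> {min y t0..max y t0}" for s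
        proof -
          have "\<bar>y - s\<bar> \<le> \<bar>y - t0\<bar>" using that by (auto simp: abs_if min_def max_def split: if_splits)
          then have "\<bar>y - s\<bar> < d1" using ytd by linarith
          moreover have "s \<in> {a..b}" using that ya t0 ytd by (auto simp: b_def min_def max_def abs_if split: if_splits)
          ultimately show ?thesis unfolding h_def by (intro bnd)
        qed
        have "norm (E y) \<le> e * \<bar>y - t0\<bar>"
        proof (cases "t0 \<le> y")
          case True
          have eq: "integral {a..t0} h + integral {t0..y} h = integral {a..y} h"
            by (rule Henstock_Kurzweil_Integration.integral_combine) (use True t0 hcont in \<open>auto intro!: integrable_continuous_interval\<close>)
          have "E y = (integral {a..t0} h + integral {t0..y} h) - integral {a..t0} h" using Ey eq by simp
          also have "\<dots> = integral {t0..y} h" by simp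
          also have "norm \<dots> \<le> e * (y - t0)"
            by (rule int_bound) (use hcont t0 True hb e in auto)
          finally show ?thesis using True by simp
        next
          case False
          have eq: "integral {a..y} h + integral {y..t0} h = integral {a..t0} h"
            by (rule Henstock_Kurzweil_Integration.integral_combine) (use False ya hcont in \<open>auto intro!: integrable_continuous_interval\<close>)
          have "E y = integral {a..y} h - (integral {a..y} h + integral {y..t0} h)" using Ey eq by simp
          then have "E y = - integral {y..t0} h" by simp
          then have "norm (E y) = norm (integral {y..t0} h)" by simp
          also have "\<dots> \<le> e * (t0 - y)"
            by (rule int_bound) (use hcont ya False hb e in auto)
          finally show ?thesis using False by simp
        qed
        then show "norm (E y - E t0 - (y - t0) *\<^sub>R 0) \<le> e * norm (y - t0)" using E0 by simp
      qed
      moreover have "d > 0" using d1 by (simp add: d_def)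
      ultimately show ?thesis by blast
    qed
    show ?thesis unfolding has_vector_derivative_def has_derivative_within_alt
      using key by (auto intro: bounded_linear_scaleR_left)
  qed
  have "((\<lambda>t. P t + Sf t + E t - Sf t0) has_vector_derivative
     (integral {a..t0} (\<lambda>s. Kd (t0 - s) (g s)) + K 0 (g t0) + 0 - 0)) (at t0 within {a..})"
    by (intro has_vector_derivative_diff has_vector_derivative_add dP dS dE has_vector_derivative_const)
  moreover have "(\<lambda>t. P t + Sf t + E t - Sf t0) = (\<lambda>t. integral {a..t} (\<lambda>s. K (t - s) (g s)))"
    by (rule ext) (simp add: E_def H_def)
  ultimately show ?thesis by (simp add: algebra_simps)
qed


lemma apply_deriv:
  fixes A :: "real \<Rightarrow> 'a::real_normed_vector \<Rightarrow>\<^sub>L 'b::real_normed_vector"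
  assumes "(A has_vector_derivative A') F"
  shows "((\<lambda>t. A t v) has_vector_derivative A' v) F"
  by (rule bounded_linear.has_vector_derivative[OF blinfun.bounded_linear_left assms])

lemma leib_within0:
  fixes K Kd :: "real \<Rightarrow> 'a::banach \<Rightarrow>\<^sub>L 'a" and g :: "real \<Rightarrow> 'a"
  assumes d: "\<And>w. w \<ge> 0 \<Longrightarrow> (K has_vector_derivative Kd w) (at w within {0..})"
    and c: "continuous_on {0..} Kd" and gc: "continuous_on {a..b} g" and b: "b \<le> 0" and t: "t \<ge> 0"
  shows "((\<lambda>t. integral {a..b} (\<lambda>s. K (t - s) (g s))) has_vector_derivative
           integral {a..b} (\<lambda>s. Kd (t - s) (g s))) (at t within {0..})"
proof -
  let ?Kt = "\<lambda>w. if 0 \<le> w then K w else K 0 + w *\<^sub>R Kd 0"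
  have l: "((\<lambda>t. integral {a..b} (\<lambda>s. ?Kt (t - s) (g s))) has_vector_derivative
           integral {a..b} (\<lambda>s. Kd (max 0 (t - s)) (g s))) (at t within {0..})"
    by (rule has_vector_derivative_at_within[OF leib[OF ext_kernel(1)[OF d c] ext_kernel(2)[OF d c] gc]])
  have e1: "integral {a..b} (\<lambda>s. Kd (max 0 (t - s)) (g s)) = integral {a..b} (\<lambda>s. Kd (t - s) (g s))"
    by (rule integral_cong) (use b t in auto)
  have e2: "integral {a..b} (\<lambda>s. ?Kt (t' - s) (g s)) = integral {a..b} (\<lambda>s. K (t' - s) (g s))"
    if "t' \<in> {0..}" for t'
    by (rule integral_cong) (use b that in auto)
  show ?thesis using l unfolding e1
    by (rule has_vector_derivative_transform[rotated 2]) (use t e2 in auto)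
qed

lemma conv_within:
  fixes K Kd :: "real \<Rightarrow> 'a::banach \<Rightarrow>\<^sub>L 'a" and g :: "real \<Rightarrow> 'a"
  assumes d: "\<And>w. w \<ge> 0 \<Longrightarrow> (K has_vector_derivative Kd w) (at w within {0..})"
    and c: "continuous_on {0..} Kd" and gc: "continuous_on {a..} g" and t: "a \<le> t"
  shows "((\<lambda>t. integral {a..t} (\<lambda>s. K (t - s) (g s))) has_vector_derivative
           (K 0 (g t) + integral {a..t} (\<lambda>s. Kd (t - s) (g s)))) (at t within {a..})"
proof -
  let ?Kt = "\<lambda>w. if 0 \<le> w then K w else K 0 + w *\<^sub>R Kd 0"
  have l: "((\<lambda>t. integral {a..t} (\<lambda>s. ?Kt (t - s) (g s))) has_vector_derivative
           (?Kt 0 (g t) + integral {a..t} (\<lambda>s. Kd (max 0 (t - s)) (g s)))) (at t within {a..})"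
    by (rule conv_deriv[OF ext_kernel(1)[OF d c] ext_kernel(2)[OF d c] gc t])
  have e1: "integral {a..t} (\<lambda>s. Kd (max 0 (t - s)) (g s)) = integral {a..t} (\<lambda>s. Kd (t - s) (g s))"
    by (rule integral_cong) auto
  have e2: "integral {a..t'} (\<lambda>s. ?Kt (t' - s) (g s)) = integral {a..t'} (\<lambda>s. K (t' - s) (g s))"
    for t'
    by (rule integral_cong) auto
  show ?thesis using l unfolding e1 e2 by simp
qed


definition Fsol :: "real \<Rightarrow> ('a::banach \<Rightarrow>\<^sub>L 'a) \<Rightarrow> (real \<Rightarrow> 'a) \<Rightarrow> (real \<Rightarrow> 'a) \<Rightarrow> (real \<Rightarrow> 'a) \<Rightarrow> (real \<Rightarrow> 'a) \<Rightarrow> real \<Rightarrow> 'a" where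
  "Fsol \<tau> \<Omega> \<phi> \<phi>' \<phi>'' f t = x1 \<tau> \<Omega> (t + \<tau>) (\<phi> (-2*\<tau>)) + x2 \<tau> \<Omega> (t + 2*\<tau>) (\<phi>' (-2*\<tau>))
                   + integral {-2*\<tau>..0} (\<lambda>s. x2 \<tau> \<Omega> (t - s) (\<phi>'' s))
                   + (if t < 0 then 0 else integral {0..t} (\<lambda>s. x2 \<tau> \<Omega> (t - s) (f s)))"

locale setting =
  fixes \<Omega> :: "'a::banach \<Rightarrow>\<^sub>L 'a"
    and \<tau> :: real
    and \<phi> \<phi>' \<phi>'' f :: "real \<Rightarrow> 'a"
  assumes iso: "is_iso \<Omega>"
    and tau: "\<tau> > 0"
    and phi1: "\<forall>t\<in>{-2*\<tau>..0}. (\<phi> has_vector_derivative \<phi>' t) (at t within {-2*\<tau>..0})"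
    and phi2: "\<forall>t\<in>{-2*\<tau>..0}. (\<phi>' has_vector_derivative \<phi>'' t) (at t within {-2*\<tau>..0})"
    and phi2c: "continuous_on {-2*\<tau>..0} \<phi>''"
    and fc: "continuous_on {0..} f"
begin

lemma phi2c': "continuous_on {-(2*\<tau>)..0} \<phi>''" using phi2c by simp

abbreviation "F \<equiv> Fsol \<tau> \<Omega> \<phi> \<phi>' \<phi>'' f"

lemma x2c: "continuous_on S (x2 \<tau> \<Omega>)"
  using x2_cont[OF iso tau] continuous_on_subset by blast

lemma h_cont:
  assumes "continuous_on {p..q} g"
  shows "continuous_on {p..q} (\<lambda>s. x2 \<tau> \<Omega> (c - s) (g s))"
  using assms by (auto intro!: blinfun.continuous_on continuous_on_compose2[OF x2c] continuous_intros)

lemma F_phi: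
  assumes t: "t \<in> {-2*\<tau>..0}"
  shows "F t = \<phi> t"
proof -
  define g where "g s = \<phi>'' (min s 0)" for s
  have gc: "continuous_on {-2*\<tau>..} g"
    unfolding g_def by (rule continuous_on_compose2[OF phi2c]) (use tau in \<open>auto intro!: continuous_intros\<close>)
  define F0 where "F0 t = \<phi> (-2*\<tau>) + x2 \<tau> \<Omega> (t + 2*\<tau>) (\<phi>' (-2*\<tau>))
       + integral {-2*\<tau>..t} (\<lambda>s. x2 \<tau> \<Omega> (t - s) (g s))" for t
  have dF0: "(F0 has_vector_derivative \<phi>' t) (at t within {-2*\<tau>..0})" if t: "t \<in> {-2*\<tau>..0}" for t
  proof -
    have a: "(x2 \<tau> \<Omega> has_vector_derivative x1 \<tau> \<Omega> (t + 2*\<tau> - \<tau>)) (at (t + 2*\<tau>) within {0..})"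
      using x2_deriv[OF iso tau, of "t + 2*\<tau>"] t by simp
    have "((\<lambda>t. x2 \<tau> \<Omega> (t + 2*\<tau>)) has_vector_derivative x1 \<tau> \<Omega> (t + 2*\<tau> - \<tau>)) (at t within {-2*\<tau>..0})"
      by (rule shift_deriv[OF a]) auto
    moreover have "x1 \<tau> \<Omega> (t + 2*\<tau> - \<tau>) = id_blinfun"
      using t tau by (intro x1_id) auto
    ultimately have d1: "((\<lambda>t. x2 \<tau> \<Omega> (t + 2*\<tau>) (\<phi>' (-2*\<tau>))) has_vector_derivative \<phi>' (-2*\<tau>)) (at t within {-2*\<tau>..0})"
      using apply_deriv by fastforce
    have "((\<lambda>t. integral {-2*\<tau>..t} (\<lambda>s. x2 \<tau> \<Omega> (t - s) (g s))) has_vector_derivative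
       (x2 \<tau> \<Omega> 0 (g t) + integral {-2*\<tau>..t} (\<lambda>s. x1 \<tau> \<Omega> (t - s - \<tau>) (g s)))) (at t within {-2*\<tau>..})"
      by (rule conv_within[OF x2_deriv[OF iso tau] K2_cont[OF iso tau] gc]) (use t in auto)
    then have d2': "((\<lambda>t. integral {-2*\<tau>..t} (\<lambda>s. x2 \<tau> \<Omega> (t - s) (g s))) has_vector_derivative
       (x2 \<tau> \<Omega> 0 (g t) + integral {-2*\<tau>..t} (\<lambda>s. x1 \<tau> \<Omega> (t - s - \<tau>) (g s)))) (at t within {-2*\<tau>..0})"
      by (rule has_vector_derivative_within_subset) auto
    have e1: "integral {-2*\<tau>..t} (\<lambda>s. x1 \<tau> \<Omega> (t - s - \<tau>) (g s)) = integral {-2*\<tau>..t} \<phi>''"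
    proof (rule integral_cong)
      fix s assume s: "s \<in> {-2*\<tau>..t}"
      have "x1 \<tau> \<Omega> (t - s - \<tau>) = id_blinfun" using s t tau by (intro x1_id) auto
      then show "x1 \<tau> \<Omega> (t - s - \<tau>) (g s) = \<phi>'' s" using s t by (simp add: g_def)
    qed
    have "(\<phi>'' has_integral (\<phi>' t - \<phi>' (-2*\<tau>))) {-2*\<tau>..t}"
    proof (rule fundamental_theorem_of_calculus)
      show "-2*\<tau> \<le> t" using t by simp
      fix x assume x: "x \<in> {-2*\<tau>..t}"
      then have "x \<in> {-2*\<tau>..0}" using t by auto
      then have "(\<phi>' has_vector_derivative \<phi>'' x) (at x within {-2*\<tau>..0})" using phi2 by blast
      then show "(\<phi>' has_vector_derivative \<phi>'' x) (at x within {-2*\<tau>..t})"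
        by (rule has_vector_derivative_within_subset) (use t in auto)
    qed
    then have e2: "integral {-2*\<tau>..t} \<phi>'' = \<phi>' t - \<phi>' (-2*\<tau>)" by (rule integral_unique)
    have d2: "((\<lambda>t. integral {-2*\<tau>..t} (\<lambda>s. x2 \<tau> \<Omega> (t - s) (g s))) has_vector_derivative
       (\<phi>' t - \<phi>' (-2*\<tau>))) (at t within {-2*\<tau>..0})"
      using d2' unfolding e1 e2 using tau by (simp add: x2_zero)
    have "(F0 has_vector_derivative (0 + \<phi>' (-2*\<tau>) + (\<phi>' t - \<phi>' (-2*\<tau>)))) (at t within {-2*\<tau>..0})"
      unfolding F0_def[abs_def] by (intro has_vector_derivative_add d1 d2 has_vector_derivative_const)
    then show ?thesis by simp
  qed
  have D0: "((\<lambda>t. F0 t - \<phi> t) has_vector_derivative 0) (at t within {-2*\<tau>..0})" if "t \<in> {-2*\<tau>..0}" for t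
    using has_vector_derivative_diff[OF dF0[OF that] phi1[rule_format, OF that]] by simp
  have cv: "convex {-2*\<tau>..0::real}" using convex_real_interval by blast
  obtain C where C: "\<And>t. t \<in> {-2*\<tau>..0} \<Longrightarrow> F0 t - \<phi> t = C"
    using has_vector_derivative_zero_constant[OF cv, of "\<lambda>t. F0 t - \<phi> t"] D0 by blast
  have "F0 (-2*\<tau>) - \<phi> (-2*\<tau>) = 0"
    unfolding F0_def using tau by (simp add: x2_zero)
  moreover have "-2*\<tau> \<in> {-2*\<tau>..0}" using tau by simp
  ultimately have C0: "C = 0" using C by force
  have FF0: "F t = F0 t"
  proof -
    have x1e: "x1 \<tau> \<Omega> (t + \<tau>) = id_blinfun" using t tau by (intro x1_id) auto
    have ife: "(if t < 0 then 0 else integral {0..t} (\<lambda>s. x2 \<tau> \<Omega> (t - s) (f s))) = 0"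
      using t by auto
    let ?h = "\<lambda>s. x2 \<tau> \<Omega> (t - s) (\<phi>'' s)"
    have comb: "integral {-2*\<tau>..t} ?h + integral {t..0} ?h = integral {-2*\<tau>..0} ?h"
      by (rule Henstock_Kurzweil_Integration.integral_combine)
         (use t in \<open>auto intro!: integrable_continuous_interval h_cont phi2c'\<close>)
    have z: "integral {t..0} ?h = 0"
    proof -
      have "integral {t..0} ?h = integral {t..0} (\<lambda>s. 0)"
        by (rule integral_cong) (use tau in \<open>auto simp: x2_nonpos\<close>)
      then show ?thesis by simp
    qed
    have gi: "integral {-2*\<tau>..t} ?h = integral {-2*\<tau>..t} (\<lambda>s. x2 \<tau> \<Omega> (t - s) (g s))"
      by (rule integral_cong) (use t in \<open>auto simp: g_def\<close>)
    show ?thesis unfolding Fsol_def F0_def x1e ife using comb z gi by simp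
  qed
  show ?thesis using FF0 C[OF t] C0 by simp
qed

end


context setting begin

definition Fd :: "real \<Rightarrow> 'a" where
 "Fd t = (\<Omega> o\<^sub>L \<Omega> o\<^sub>L x2 \<tau> \<Omega> t) (\<phi> (-2*\<tau>)) + x1 \<tau> \<Omega> (t + \<tau>) (\<phi>' (-2*\<tau>))
    + integral {-2*\<tau>..0} (\<lambda>s. x1 \<tau> \<Omega> (t - s - \<tau>) (\<phi>'' s))
    + integral {0..t} (\<lambda>s. x1 \<tau> \<Omega> (t - s - \<tau>) (f s))"

definition Fdd :: "real \<Rightarrow> 'a" where
 "Fdd t = (\<Omega> o\<^sub>L \<Omega> o\<^sub>L x1 \<tau> \<Omega> (t - \<tau>)) (\<phi> (-2*\<tau>)) + (\<Omega> o\<^sub>L \<Omega> o\<^sub>L x2 \<tau> \<Omega> t) (\<phi>' (-2*\<tau>))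
    + integral {-2*\<tau>..0} (\<lambda>s. (\<Omega> o\<^sub>L \<Omega> o\<^sub>L x2 \<tau> \<Omega> (t - s - 2*\<tau>)) (\<phi>'' s))
    + x1 \<tau> \<Omega> (-\<tau>) (f t)
    + integral {0..t} (\<lambda>s. (\<Omega> o\<^sub>L \<Omega> o\<^sub>L x2 \<tau> \<Omega> (t - s - 2*\<tau>)) (f s))"

lemma K3c: "continuous_on S (\<lambda>w. \<Omega> o\<^sub>L \<Omega> o\<^sub>L x2 \<tau> \<Omega> (w - 2*\<tau>))"
  by (intro bounded_bilinear.continuous_on[OF bounded_bilinear_blinfun_compose] continuous_on_const
      continuous_on_compose2[OF x2c] continuous_intros) auto

lemma img2: "(\<lambda>y. y + 2*\<tau>) ` {0..} \<subseteq> {0..}"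
proof
  fix z assume "z \<in> (\<lambda>y. y + 2*\<tau>) ` {0..}"
  then obtain y where "y \<ge> 0" "z = y + 2*\<tau>" by auto
  then show "z \<in> {0..}" using tau by simp
qed

lemma t1:
  assumes t: "t \<ge> 0"
  shows "((\<lambda>t. x1 \<tau> \<Omega> (t + \<tau>) v) has_vector_derivative (\<Omega> o\<^sub>L \<Omega> o\<^sub>L x2 \<tau> \<Omega> t) v) (at t within {0..})"
proof -
  have a: "((\<lambda>w. x1 \<tau> \<Omega> (w - \<tau>)) has_vector_derivative \<Omega> o\<^sub>L \<Omega> o\<^sub>L x2 \<tau> \<Omega> (t + 2*\<tau> - 2 * \<tau>))
     (at (t + 2*\<tau>) within {0..})"
    by (rule K2_deriv[OF iso tau]) (use t tau in auto)
  have "((\<lambda>w. x1 \<tau> \<Omega> (w + 2*\<tau> - \<tau>)) has_vector_derivative \<Omega> o\<^sub>L \<Omega> o\<^sub>L x2 \<tau> \<Omega> (t + 2*\<tau> - 2 * \<tau>))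
     (at t within {0..})"
    using shift_deriv[OF a img2] by simp
  then have "((\<lambda>w. x1 \<tau> \<Omega> (w + \<tau>)) has_vector_derivative \<Omega> o\<^sub>L \<Omega> o\<^sub>L x2 \<tau> \<Omega> t) (at t within {0..})"
    by (simp add: algebra_simps)
  then show ?thesis by (rule apply_deriv)
qed

lemma t2:
  assumes t: "t \<ge> 0"
  shows "((\<lambda>t. x2 \<tau> \<Omega> (t + 2*\<tau>) v) has_vector_derivative x1 \<tau> \<Omega> (t + \<tau>) v) (at t within {0..})"
proof -
  have a: "(x2 \<tau> \<Omega> has_vector_derivative x1 \<tau> \<Omega> (t + 2*\<tau> - \<tau>)) (at (t + 2*\<tau>) within {0..})"
    by (rule x2_deriv[OF iso tau]) (use t tau in auto)
  have "((\<lambda>w. x2 \<tau> \<Omega> (w + 2*\<tau>)) has_vector_derivative x1 \<tau> \<Omega> (t + 2*\<tau> - \<tau>)) (at t within {0..})"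
    using shift_deriv[OF a img2] by simp
  then have "((\<lambda>w. x2 \<tau> \<Omega> (w + 2*\<tau>)) has_vector_derivative x1 \<tau> \<Omega> (t + \<tau>)) (at t within {0..})"
    by (simp add: algebra_simps)
  then show ?thesis by (rule apply_deriv)
qed

lemma F_deriv:
  assumes t: "t \<ge> 0"
  shows "(F has_vector_derivative Fd t) (at t within {0..})"
proof -
  have t3: "((\<lambda>t. integral {-2*\<tau>..0} (\<lambda>s. x2 \<tau> \<Omega> (t - s) (\<phi>'' s))) has_vector_derivative
      integral {-2*\<tau>..0} (\<lambda>s. x1 \<tau> \<Omega> (t - s - \<tau>) (\<phi>'' s))) (at t within {0..})"
    using leib_within0[where K="x2 \<tau> \<Omega>" and Kd="\<lambda>w. x1 \<tau> \<Omega> (w - \<tau>)", OF x2_deriv[OF iso tau]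
      K2_cont[OF iso tau] phi2c _ t] by simp
  have t4: "((\<lambda>t. integral {0..t} (\<lambda>s. x2 \<tau> \<Omega> (t - s) (f s))) has_vector_derivative
      (x2 \<tau> \<Omega> 0 (f t) + integral {0..t} (\<lambda>s. x1 \<tau> \<Omega> (t - s - \<tau>) (f s)))) (at t within {0..})"
    using conv_within[where K="x2 \<tau> \<Omega>" and Kd="\<lambda>w. x1 \<tau> \<Omega> (w - \<tau>)", OF x2_deriv[OF iso tau]
      K2_cont[OF iso tau] fc t] by simp
  have "((\<lambda>t. x1 \<tau> \<Omega> (t + \<tau>) (\<phi> (-2*\<tau>)) + x2 \<tau> \<Omega> (t + 2*\<tau>) (\<phi>' (-2*\<tau>))
                   + integral {-2*\<tau>..0} (\<lambda>s. x2 \<tau> \<Omega> (t - s) (\<phi>'' s))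
                   + integral {0..t} (\<lambda>s. x2 \<tau> \<Omega> (t - s) (f s))) has_vector_derivative
     ((\<Omega> o\<^sub>L \<Omega> o\<^sub>L x2 \<tau> \<Omega> t) (\<phi> (-2*\<tau>)) + x1 \<tau> \<Omega> (t + \<tau>) (\<phi>' (-2*\<tau>))
     + integral {-2*\<tau>..0} (\<lambda>s. x1 \<tau> \<Omega> (t - s - \<tau>) (\<phi>'' s))
     + (x2 \<tau> \<Omega> 0 (f t) + integral {0..t} (\<lambda>s. x1 \<tau> \<Omega> (t - s - \<tau>) (f s))))) (at t within {0..})"
    by (intro has_vector_derivative_add t1 t2 t3 t4 t)
  then have d: "((\<lambda>t. x1 \<tau> \<Omega> (t + \<tau>) (\<phi> (-2*\<tau>)) + x2 \<tau> \<Omega> (t + 2*\<tau>) (\<phi>' (-2*\<tau>))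
                   + integral {-2*\<tau>..0} (\<lambda>s. x2 \<tau> \<Omega> (t - s) (\<phi>'' s))
                   + integral {0..t} (\<lambda>s. x2 \<tau> \<Omega> (t - s) (f s))) has_vector_derivative Fd t) (at t within {0..})"
    unfolding Fd_def using tau by (simp add: x2_zero)
  show ?thesis
    by (rule has_vector_derivative_transform[OF _ _ d]) (use t in \<open>auto simp: Fsol_def\<close>)
qed

lemma Fd_deriv:
  assumes t: "t \<ge> 0"
  shows "(Fd has_vector_derivative Fdd t) (at t within {0..})"
proof -
  have bl: "bounded_linear (\<lambda>X. \<Omega> o\<^sub>L \<Omega> o\<^sub>L X)"
    by (rule bounded_bilinear.bounded_linear_right[OF bounded_bilinear_blinfun_compose])
  have u1: "((\<lambda>t. (\<Omega> o\<^sub>L \<Omega> o\<^sub>L x2 \<tau> \<Omega> t) (\<phi> (-2*\<tau>))) has_vector_derivative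
      (\<Omega> o\<^sub>L \<Omega> o\<^sub>L x1 \<tau> \<Omega> (t - \<tau>)) (\<phi> (-2*\<tau>))) (at t within {0..})"
    by (rule apply_deriv[OF bounded_linear.has_vector_derivative[OF bl x2_deriv[OF iso tau t]]])
  have u3: "((\<lambda>t. integral {-2*\<tau>..0} (\<lambda>s. x1 \<tau> \<Omega> (t - s - \<tau>) (\<phi>'' s))) has_vector_derivative
      integral {-2*\<tau>..0} (\<lambda>s. (\<Omega> o\<^sub>L \<Omega> o\<^sub>L x2 \<tau> \<Omega> (t - s - 2*\<tau>)) (\<phi>'' s))) (at t within {0..})"
    using leib_within0[where K="\<lambda>w. x1 \<tau> \<Omega> (w - \<tau>)" and Kd="\<lambda>w. \<Omega> o\<^sub>L \<Omega> o\<^sub>L x2 \<tau> \<Omega> (w - 2*\<tau>)",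
      OF K2_deriv[OF iso tau] K3c phi2c _ t] by simp
  have u4: "((\<lambda>t. integral {0..t} (\<lambda>s. x1 \<tau> \<Omega> (t - s - \<tau>) (f s))) has_vector_derivative
      (x1 \<tau> \<Omega> (0 - \<tau>) (f t) + integral {0..t} (\<lambda>s. (\<Omega> o\<^sub>L \<Omega> o\<^sub>L x2 \<tau> \<Omega> (t - s - 2*\<tau>)) (f s))))
      (at t within {0..})"
    using conv_within[where K="\<lambda>w. x1 \<tau> \<Omega> (w - \<tau>)" and Kd="\<lambda>w. \<Omega> o\<^sub>L \<Omega> o\<^sub>L x2 \<tau> \<Omega> (w - 2*\<tau>)",
      OF K2_deriv[OF iso tau] K3c fc t] by simp
  have "(Fd has_vector_derivative
     ((\<Omega> o\<^sub>L \<Omega> o\<^sub>L x1 \<tau> \<Omega> (t - \<tau>)) (\<phi> (-2*\<tau>)) + (\<Omega> o\<^sub>L \<Omega> o\<^sub>L x2 \<tau> \<Omega> t) (\<phi>' (-2*\<tau>))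
     + integral {-2*\<tau>..0} (\<lambda>s. (\<Omega> o\<^sub>L \<Omega> o\<^sub>L x2 \<tau> \<Omega> (t - s - 2*\<tau>)) (\<phi>'' s))
     + (x1 \<tau> \<Omega> (0 - \<tau>) (f t) + integral {0..t} (\<lambda>s. (\<Omega> o\<^sub>L \<Omega> o\<^sub>L x2 \<tau> \<Omega> (t - s - 2*\<tau>)) (f s)))))
     (at t within {0..})"
    unfolding Fd_def[abs_def] by (intro has_vector_derivative_add u1 t1 u3 u4 t)
  then show ?thesis unfolding Fdd_def by (simp add: algebra_simps)
qed

end


context setting begin

lemma fc_sub: "continuous_on {0..t} f"
  by (rule continuous_on_subset[OF fc]) auto

lemma Fdd_eq:
  assumes t: "t \<ge> 0"
  shows "Fdd t = \<Omega> (\<Omega> (F (t - 2*\<tau>))) + f t"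
proof -
  have x1m: "x1 \<tau> \<Omega> (-\<tau>) = id_blinfun" using tau by (intro x1_id) auto
  have i1: "integral {-2*\<tau>..0} (\<lambda>s. (\<Omega> o\<^sub>L \<Omega> o\<^sub>L x2 \<tau> \<Omega> (t - s - 2*\<tau>)) (\<phi>'' s))
      = \<Omega> (\<Omega> (integral {-2*\<tau>..0} (\<lambda>s. x2 \<tau> \<Omega> (t - 2*\<tau> - s) (\<phi>'' s))))"
  proof -
    have c1: "continuous_on {-2*\<tau>..0} (\<lambda>s. x2 \<tau> \<Omega> (t - 2*\<tau> - s) (\<phi>'' s))"
      by (rule h_cont[OF phi2c])
    have c2: "continuous_on {-2*\<tau>..0} (\<lambda>s. \<Omega> (x2 \<tau> \<Omega> (t - 2*\<tau> - s) (\<phi>'' s)))"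
      by (rule blinfun.continuous_on[OF continuous_on_const c1])
    have "integral {-2*\<tau>..0} (\<lambda>s. (\<Omega> o\<^sub>L \<Omega> o\<^sub>L x2 \<tau> \<Omega> (t - s - 2*\<tau>)) (\<phi>'' s))
       = integral {-2*\<tau>..0} (\<lambda>s. \<Omega> (\<Omega> (x2 \<tau> \<Omega> (t - 2*\<tau> - s) (\<phi>'' s))))"
      by (rule integral_cong) (simp add: algebra_simps)
    also have "\<dots> = \<Omega> (integral {-2*\<tau>..0} (\<lambda>s. \<Omega> (x2 \<tau> \<Omega> (t - 2*\<tau> - s) (\<phi>'' s))))"
      by (rule integral_blinfun_apply[OF integrable_continuous_interval[OF c2]])
    also have "\<dots> = \<Omega> (\<Omega> (integral {-2*\<tau>..0} (\<lambda>s. x2 \<tau> \<Omega> (t - 2*\<tau> - s) (\<phi>'' s))))"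
      unfolding integral_blinfun_apply[OF integrable_continuous_interval[OF c1]] by (rule refl)
    finally show ?thesis .
  qed
  have i2: "integral {0..t} (\<lambda>s. (\<Omega> o\<^sub>L \<Omega> o\<^sub>L x2 \<tau> \<Omega> (t - s - 2*\<tau>)) (f s))
      = \<Omega> (\<Omega> (integral {0..t} (\<lambda>s. x2 \<tau> \<Omega> (t - 2*\<tau> - s) (f s))))"
  proof -
    have c1: "continuous_on {0..t} (\<lambda>s. x2 \<tau> \<Omega> (t - 2*\<tau> - s) (f s))"
      by (rule h_cont[OF fc_sub])
    have c2: "continuous_on {0..t} (\<lambda>s. \<Omega> (x2 \<tau> \<Omega> (t - 2*\<tau> - s) (f s)))"
      by (rule blinfun.continuous_on[OF continuous_on_const c1])
    have "integral {0..t} (\<lambda>s. (\<Omega> o\<^sub>L \<Omega> o\<^sub>L x2 \<tau> \<Omega> (t - s - 2*\<tau>)) (f s))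
       = integral {0..t} (\<lambda>s. \<Omega> (\<Omega> (x2 \<tau> \<Omega> (t - 2*\<tau> - s) (f s))))"
      by (rule integral_cong) (simp add: algebra_simps)
    also have "\<dots> = \<Omega> (integral {0..t} (\<lambda>s. \<Omega> (x2 \<tau> \<Omega> (t - 2*\<tau> - s) (f s))))"
      by (rule integral_blinfun_apply[OF integrable_continuous_interval[OF c2]])
    also have "\<dots> = \<Omega> (\<Omega> (integral {0..t} (\<lambda>s. x2 \<tau> \<Omega> (t - 2*\<tau> - s) (f s))))"
      by (simp add: integral_blinfun_apply[OF integrable_continuous_interval[OF c1]])
    finally show ?thesis .
  qed
  have J: "integral {0..t} (\<lambda>s. x2 \<tau> \<Omega> (t - 2*\<tau> - s) (f s))
     = (if t - 2*\<tau> < 0 then 0 else integral {0..t - 2*\<tau>} (\<lambda>s. x2 \<tau> \<Omega> (t - 2*\<tau> - s) (f s)))"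
  proof (cases "t - 2*\<tau> < 0")
    case True
    have "integral {0..t} (\<lambda>s. x2 \<tau> \<Omega> (t - 2*\<tau> - s) (f s)) = integral {0..t} (\<lambda>s. 0)"
      by (rule integral_cong) (use True in \<open>auto simp: x2_neg\<close>)
    then show ?thesis using True by simp
  next
    case False
    let ?h = "\<lambda>s. x2 \<tau> \<Omega> (t - 2*\<tau> - s) (f s)"
    have comb: "integral {0..t - 2*\<tau>} ?h + integral {t - 2*\<tau>..t} ?h = integral {0..t} ?h"
      by (rule Henstock_Kurzweil_Integration.integral_combine)
         (use False tau in \<open>auto intro!: integrable_continuous_interval h_cont fc_sub\<close>)
    have "integral {t - 2*\<tau>..t} ?h = integral {t - 2*\<tau>..t} (\<lambda>s. 0)"
      by (rule integral_cong) (use tau in \<open>auto simp: x2_nonpos\<close>)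
    then have "integral {t - 2*\<tau>..t} ?h = 0" by simp
    then show ?thesis using comb False by simp
  qed
  have e1: "t - 2*\<tau> + \<tau> = t - \<tau>" by simp
  have e2: "t - 2*\<tau> + 2*\<tau> = t" by simp
  show ?thesis
    unfolding Fdd_def Fsol_def i1 i2 J x1m e1 e2
    by (simp add: blinfun.add_right)
qed

lemma Fd0: "Fd 0 = \<phi>' 0"
proof -
  have "(\<phi>'' has_integral (\<phi>' 0 - \<phi>' (-2*\<tau>))) {-2*\<tau>..0}"
    by (rule fundamental_theorem_of_calculus) (use tau phi2 in auto)
  then have e: "integral {-2*\<tau>..0} \<phi>'' = \<phi>' 0 - \<phi>' (-2*\<tau>)" by (rule integral_unique)
  have c: "integral {-2*\<tau>..0} (\<lambda>s. x1 \<tau> \<Omega> (0 - s - \<tau>) (\<phi>'' s)) = integral {-2*\<tau>..0} \<phi>''"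
  proof (rule integral_cong)
    fix s assume s: "s \<in> {-2*\<tau>..0}"
    have "x1 \<tau> \<Omega> (0 - s - \<tau>) = id_blinfun" using s tau by (intro x1_id) auto
    then show "x1 \<tau> \<Omega> (0 - s - \<tau>) (\<phi>'' s) = \<phi>'' s" by simp
  qed
  have x1t: "x1 \<tau> \<Omega> (0 + \<tau>) = id_blinfun" using tau by (intro x1_id) auto
  show ?thesis unfolding Fd_def c e x1t using tau by (simp add: x2_zero)
qed

end


lemma uniq:
  fixes \<Omega> :: "'a::banach \<Rightarrow>\<^sub>L 'a"
  assumes tau: "\<tau> > 0" and x: "classical_solution \<tau> \<Omega> \<phi> f x" and y: "classical_solution \<tau> \<Omega> \<phi> f y"
  shows "\<forall>t\<in>{-2*\<tau>..}. x t = y t"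
proof -
  obtain x' xl xr where X:
    "\<forall>t\<in>{-2*\<tau>..}. (x has_vector_derivative x' t) (at t within {-2*\<tau>..})"
    "\<forall>t\<in>{0..}. (x' has_vector_derivative xr t) (at t within {0..})"
    "\<forall>t\<in>{0..}. xr t - \<Omega> (\<Omega> (x (t - 2*\<tau>))) = f t"
    "\<forall>t\<in>{-2*\<tau>..0}. x t = \<phi> t"
    using x unfolding classical_solution_def by blast
  obtain y' yl yr where Y:
    "\<forall>t\<in>{-2*\<tau>..}. (y has_vector_derivative y' t) (at t within {-2*\<tau>..})"
    "\<forall>t\<in>{0..}. (y' has_vector_derivative yr t) (at t within {0..})"
    "\<forall>t\<in>{0..}. yr t - \<Omega> (\<Omega> (y (t - 2*\<tau>))) = f t"
    "\<forall>t\<in>{-2*\<tau>..0}. y t = \<phi> t"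
    using y unfolding classical_solution_def by blast
  define d where "d t = x t - y t" for t
  define d' where "d' t = x' t - y' t" for t
  have dd: "(d has_vector_derivative d' t) (at t within {-2*\<tau>..})" if "t \<in> {-2*\<tau>..}" for t
    unfolding d_def[abs_def] d'_def using X(1) Y(1) that by (intro has_vector_derivative_diff) auto
  have ddr: "(d' has_vector_derivative 0) (at t within {0..})"
    if t: "t \<in> {0..}" and z: "d (t - 2*\<tau>) = 0" for t
  proof -
    have "(d' has_vector_derivative xr t - yr t) (at t within {0..})"
      unfolding d'_def[abs_def] using X(2) Y(2) t by (intro has_vector_derivative_diff) auto
    moreover have "xr t - yr t = \<Omega> (\<Omega> (d (t - 2*\<tau>)))"
      using X(3) Y(3) t unfolding d_def by (auto simp: blinfun.diff_right algebra_simps)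
    ultimately show ?thesis using z by simp
  qed
  have d0: "d t = 0" if "t \<in> {-2*\<tau>..0}" for t
    using X(4) Y(4) that unfolding d_def by auto
  have d'0: "d' 0 = 0"
  proof -
    have A: "(d has_vector_derivative d' 0) (at 0 within {-2*\<tau>..0})"
      by (rule has_vector_derivative_within_subset[OF dd]) (use tau in auto)
    have B: "(d has_vector_derivative 0) (at 0 within {-2*\<tau>..0})"
      by (rule has_vector_derivative_transform[OF _ _ has_vector_derivative_const[of 0]])
         (use tau d0 in auto)
    show ?thesis
      using vector_derivative_unique_within_closed_interval[of "-2*\<tau>" 0 0 d "d' 0" 0] A B tau
      by (simp add: cbox_interval)
  qed
  have ind: "\<forall>t\<in>{-2*\<tau>..2 * real n * \<tau>}. d t = 0" for n
  proof (induction n)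
    case 0
    then show ?case using d0 by simp
  next
    case (Suc n)
    define T where "T = 2 * real (Suc n) * \<tau>"
    have T0: "T \<ge> 0" using tau by (simp add: T_def)
    have cv: "convex {0..T}" using convex_real_interval by blast
    have D1: "(d' has_vector_derivative 0) (at t within {0..T})" if t: "t \<in> {0..T}" for t
    proof -
      have "t - 2*\<tau> \<in> {-2*\<tau>..2 * real n * \<tau>}" using t by (auto simp: T_def algebra_simps)
      then have "d (t - 2*\<tau>) = 0" using Suc.IH by blast
      then have "(d' has_vector_derivative 0) (at t within {0..})" using ddr t by simp
      then show ?thesis by (rule has_vector_derivative_within_subset) auto
    qed
    obtain c where c: "\<And>t. t \<in> {0..T} \<Longrightarrow> d' t = c"
      using has_vector_derivative_zero_constant[OF cv, of d'] D1 by blast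
    have c0: "c = 0" using c[of 0] d'0 T0 by simp
    have D2: "(d has_vector_derivative 0) (at t within {0..T})" if t: "t \<in> {0..T}" for t
    proof -
      have "(d has_vector_derivative d' t) (at t within {-2*\<tau>..})" using dd t tau by auto
      then have "(d has_vector_derivative d' t) (at t within {0..T})"
        by (rule has_vector_derivative_within_subset) (use tau in auto)
      then show ?thesis using c[OF t] c0 by simp
    qed
    obtain c2 where c2: "\<And>t. t \<in> {0..T} \<Longrightarrow> d t = c2"
      using has_vector_derivative_zero_constant[OF cv, of d] D2 by blast
    have c20: "c2 = 0" using c2[of 0] d0[of 0] T0 tau by simp
    show ?case
    proof
      fix t assume t: "t \<in> {-2*\<tau>..2 * real (Suc n) * \<tau>}"
      show "d t = 0"
      proof (cases "t \<le> 0")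
        case True then show ?thesis using d0 t by auto
      next
        case False then show ?thesis using c2 c20 t by (auto simp: T_def)
      qed
    qed
  qed
  show ?thesis
  proof
    fix t assume t: "t \<in> {-2*\<tau>..}"
    obtain n where n: "t / (2*\<tau>) \<le> real n" using real_arch_simple by blast
    then have "t \<le> 2 * real n * \<tau>" using tau by (simp add: field_simps)
    then have "d t = 0" using ind[of n] t by auto
    then show "x t = y t" unfolding d_def by simp
  qed
qed

context setting begin

lemma exist: "classical_solution \<tau> \<Omega> \<phi> f F"
proof -
  define x' where "x' t = (if t \<le> 0 then \<phi>' t else Fd t)" for t
  define xr where "xr t = \<Omega> (\<Omega> (F (t - 2*\<tau>))) + f t" for t
  have x'0: "x' t = Fd t" if "t \<ge> 0" for t
    using that Fd0 by (cases "t = 0") (auto simp: x'_def)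
  have P1: "(F has_vector_derivative x' t) (at t within {-2*\<tau>..})" if t: "t \<in> {-2*\<tau>..}" for t
  proof -
    have a: "(F has_vector_derivative x' t) (at t within {-2*\<tau>..0})"
    proof (cases "t \<le> 0")
      case True
      then have tt: "t \<in> {-2*\<tau>..0}" using t by auto
      have dd: "(\<phi> has_vector_derivative \<phi>' t) (at t within {-2*\<tau>..0})" using phi1 tt by blast
      have "(F has_vector_derivative \<phi>' t) (at t within {-2*\<tau>..0})"
        by (rule has_vector_derivative_transform[OF tt F_phi dd])
      then show ?thesis using True by (simp add: x'_def)
    next
      case False then show ?thesis by (intro deriv_trivial) (auto simp: islimpt_in_closure)
    qed
    have b: "(F has_vector_derivative x' t) (at t within {0..})"
    proof (cases "t \<ge> 0")
      case True
      then show ?thesis using F_deriv[OF True] x'0[OF True] by simp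
    next
      case False then show ?thesis by (intro deriv_trivial) (auto simp: islimpt_in_closure)
    qed
    have "{-2*\<tau>..0} \<union> {0..} = {-2*\<tau>..}" using tau by auto
    then show ?thesis using deriv_Un[OF a b] by simp
  qed
  have Fdc: "continuous_on {0..} Fd"
    unfolding continuous_on_eq_continuous_within
    using Fd_deriv has_vector_derivative_continuous by blast
  have phi'c: "continuous_on {-2*\<tau>..0} \<phi>'"
    unfolding continuous_on_eq_continuous_within
    using phi2 has_vector_derivative_continuous by blast
  have P2: "continuous_on {-2*\<tau>..} x'"
  proof -
    have c1: "continuous_on {-2*\<tau>..0} x'"
      by (rule continuous_on_eq[OF phi'c]) (auto simp: x'_def)
    have c2: "continuous_on {0..} x'"
      by (rule continuous_on_eq[OF Fdc]) (auto simp: x'0)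
    have "continuous_on ({-2*\<tau>..0} \<union> {0..}) x'"
      by (rule continuous_on_closed_Un[OF _ _ c1 c2]) auto
    moreover have "{-2*\<tau>..0} \<union> {0..} = {-2*\<tau>..}" using tau by auto
    ultimately show ?thesis by simp
  qed
  have P3: "(x' has_vector_derivative \<phi>'' t) (at t within {-2*\<tau>..0})" if t: "t \<in> {-2*\<tau>..0}" for t
  proof -
    have dd: "(\<phi>' has_vector_derivative \<phi>'' t) (at t within {-2*\<tau>..0})" using phi2 t by blast
    have eq: "\<And>s. s \<in> {-2*\<tau>..0} \<Longrightarrow> x' s = \<phi>' s" by (auto simp: x'_def)
    show ?thesis by (rule has_vector_derivative_transform[OF t eq dd])
  qed
  have P5: "(x' has_vector_derivative xr t) (at t within {0..})" if t: "t \<in> {0..}" for t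
  proof -
    have dd: "(Fd has_vector_derivative xr t) (at t within {0..})"
      using Fd_deriv[of t] Fdd_eq[of t] t by (simp add: xr_def)
    have eq: "\<And>s. s \<in> {0..} \<Longrightarrow> x' s = Fd s" by (auto simp: x'0)
    show ?thesis by (rule has_vector_derivative_transform[OF t eq dd])
  qed
  have Fc: "continuous_on {-2*\<tau>..} F"
    unfolding continuous_on_eq_continuous_within
    using P1 has_vector_derivative_continuous by blast
  have P6: "continuous_on {0..} xr"
  proof -
    have "continuous_on {0..} (\<lambda>t. F (t - 2*\<tau>))"
      by (rule continuous_on_compose2[OF Fc]) (auto intro!: continuous_intros)
    then have "continuous_on {0..} (\<lambda>t. \<Omega> (\<Omega> (F (t - 2*\<tau>))))"
      by (intro blinfun.continuous_on[OF continuous_on_const])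
    then show ?thesis unfolding xr_def[abs_def] by (intro continuous_on_add fc)
  qed
  show ?thesis
    unfolding classical_solution_def
    apply (rule exI[of _ x'], rule exI[of _ \<phi>''], rule exI[of _ xr])
    using P1 P2 P3 phi2c P5 P6 F_phi by (auto simp: xr_def)
qed

end

theorem mainTheorem7:
  fixes \<Omega> :: "'a::banach \<Rightarrow>\<^sub>L 'a"
    and \<tau> :: real
    and \<phi> \<phi>' \<phi>'' f :: "real \<Rightarrow> 'a"
  assumes iso: "is_iso \<Omega>"
    and tau: "\<tau> > 0"
    and phi1: "\<forall>t\<in>{-2*\<tau>..0}. (\<phi> has_vector_derivative \<phi>' t) (at t within {-2*\<tau>..0})"
    and phi2: "\<forall>t\<in>{-2*\<tau>..0}. (\<phi>' has_vector_derivative \<phi>'' t) (at t within {-2*\<tau>..0})"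
    and phi2c: "continuous_on {-2*\<tau>..0} \<phi>''"
    and fc: "continuous_on {0..} f"
  shows "(\<exists>x. classical_solution \<tau> \<Omega> \<phi> f x)
     \<and> (\<forall>x. classical_solution \<tau> \<Omega> \<phi> f x \<longrightarrow>
          (\<forall>t\<in>{-2*\<tau>..}.
             x t = x1 \<tau> \<Omega> (t + \<tau>) (\<phi> (-2*\<tau>)) + x2 \<tau> \<Omega> (t + 2*\<tau>) (\<phi>' (-2*\<tau>))
                   + integral {-2*\<tau>..0} (\<lambda>s. x2 \<tau> \<Omega> (t - s) (\<phi>'' s))
                   + (if t < 0 then 0 else integral {0..t} (\<lambda>s. x2 \<tau> \<Omega> (t - s) (f s)))))"
proof -
  interpret setting \<Omega> \<tau> \<phi> \<phi>' \<phi>'' f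
    using iso tau phi1 phi2 phi2c fc by (rule setting.intro)
  have E: "classical_solution \<tau> \<Omega> \<phi> f (Fsol \<tau> \<Omega> \<phi> \<phi>' \<phi>'' f)" by (rule exist)
  show ?thesis
  proof (intro conjI allI impI ballI)
    show "\<exists>x. classical_solution \<tau> \<Omega> \<phi> f x" using E by blast
  next
    fix x t assume x: "classical_solution \<tau> \<Omega> \<phi> f x" and t: "t \<in> {-2*\<tau>..}"
    have "x t = Fsol \<tau> \<Omega> \<phi> \<phi>' \<phi>'' f t" using uniq[OF tau x E] t by blast
    then show "x t = x1 \<tau> \<Omega> (t + \<tau>) (\<phi> (-2*\<tau>)) + x2 \<tau> \<Omega> (t + 2*\<tau>) (\<phi>' (-2*\<tau>))
                   + integral {-2*\<tau>..0} (\<lambda>s. x2 \<tau> \<Omega> (t - s) (\<phi>'' s))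
                   + (if t < 0 then 0 else integral {0..t} (\<lambda>s. x2 \<tau> \<Omega> (t - s) (f s)))"
      unfolding Fsol_def .
  qed
qed


end
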